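(* Let $(f,g),(f',g')\in\Theta$ with logits $u,u'$, fix $x\in\mathcal X$, and suppose $\min_{y\in\mathcal Y}p_{f,g}(y\mid x)\ge\tau$ for some $0<\tau\le1/3$. Writing $K=\mathrm{KL}(p_{f,g}(\cdot\mid x)\|p_{f',g'}(\cdot\mid x))$, one has $$\|u(x)-u'(x)\|^2\le\frac{12\log(\tau)^2}{\tau}K+\frac{9}{\tau^2}K^2.$$ If in addition $\min_{y\in\mathcal Y}p_{f',g'}(y\mid x)\ge\tau$, then $\|u(x)-u'(x)\|^2\le\frac{4\log(\tau)^2}{\tau}K$.
   Context: Model class $\Theta$: pairs $(f,g)$, $f:\mathcal X\to\mathbb R^m$, $g:\mathcal Y\to\mathbb R^m$, $\mathcal Y=\{y_1,\dots,y_k\}$, with the centering convention $\sum_y g(y)=0$ (same for $g'$), inducing $p_{f,g}(y\mid x)=\exp(f(x)^\top g(y))/\sum_{y'}\exp(f(x)^\top g(y'))$. Logits $u(x)_i=f(x)^\top g(y_i)$, $u'(x)_i=f'(x)^\top g'(y_i)$. *)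

theory Defs
  imports "HOL-Analysis.Analysis"
begin

text \<open>The label set Y = {y_1,...,y_k} is a finite type 'y (k = CARD('y)); embeddings live
in real^'m. A pair (f,g) belongs to Theta iff g is centred: sum over y of g y = 0.\<close>

definition in_Theta :: "('x \<Rightarrow> real^'m) \<Rightarrow> ('y::finite \<Rightarrow> real^'m) \<Rightarrow> bool" where
  "in_Theta f g \<longleftrightarrow> (\<Sum>y\<in>UNIV. g y) = 0"

definition logits :: "('x \<Rightarrow> real^'m) \<Rightarrow> ('y::finite \<Rightarrow> real^'m) \<Rightarrow> 'x \<Rightarrow> real^'y" where
  "logits f g x = (\<chi> y. f x \<bullet> g y)"

definition cond_prob :: "('x \<Rightarrow> real^'m) \<Rightarrow> ('y::finite \<Rightarrow> real^'m) \<Rightarrow> 'x \<Rightarrow> 'y \<Rightarrow> real" where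
  "cond_prob f g x y = exp (f x \<bullet> g y) / (\<Sum>y'\<in>UNIV. exp (f x \<bullet> g y'))"

definition KL :: "('y::finite \<Rightarrow> real) \<Rightarrow> ('y \<Rightarrow> real) \<Rightarrow> real" where
  "KL p q = (\<Sum>y\<in>UNIV. p y * ln (p y / q y))"

end

theory Submission imports Defs begin

lemma phi_bounds:
  fixes t L :: real
  assumes L: "L \<ge> 1"
  shows "t\<^sup>2 \<le> 4*L\<^sup>2*(exp t - 1 - t) + 9*(exp t - 1 - t)\<^sup>2"
    and "\<bar>t\<bar> \<le> L \<Longrightarrow> t\<^sup>2 \<le> 4*L\<^sup>2*(exp t - 1 - t)"
proof -
  have L2: "L\<^sup>2 \<ge> 1" using L by (simp add: one_le_power)
  have small: "t\<^sup>2 \<le> 4*(exp t - 1 - t)" if "t \<ge> -3/2"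
  proof -
    have "0 \<le> 1 + t/3" using that by simp
    also have "1 + t/3 \<le> exp (t/3)" by (rule exp_ge_add_one_self)
    finally have "(1 + t/3)^3 \<le> (exp (t/3))^3"
      using \<open>0 \<le> 1 + t/3\<close> by (intro power_mono) auto
    also have "(exp (t/3))^3 = exp t"
      by (simp add: exp_of_nat_mult[symmetric])
    finally have e: "(1 + t/3)^3 \<le> exp t" .
    have "t\<^sup>2 \<le> 4*((1 + t/3)^3 - 1 - t)"
    proof -
      have "4*((1 + t/3)^3 - 1 - t) - t\<^sup>2 = t\<^sup>2 * (1/3 + 4*t/27)"
        by (simp add: power2_eq_square power3_eq_cube field_simps)
      also have "\<dots> \<ge> 0" using that by (intro mult_nonneg_nonneg) auto
      finally show ?thesis by simp
    qed
    then show ?thesis using e by (smt (verit))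
  qed
  have big: "\<bar>t\<bar>/3 \<le> exp t - 1 - t" if "t < -3/2"
  proof -
    have "\<bar>t\<bar> = -t" using that by simp
    thus ?thesis using that exp_gt_zero[of t] by linarith
  qed
  show "t\<^sup>2 \<le> 4*L\<^sup>2*(exp t - 1 - t) + 9*(exp t - 1 - t)\<^sup>2"
  proof (cases "t \<ge> -3/2")
    case True
    have ph0: "0 \<le> exp t - 1 - t" using exp_ge_add_one_self[of t] by linarith
    have "4*(exp t - 1 - t) \<le> 4*L\<^sup>2*(exp t - 1 - t)" using mult_right_mono[OF L2 ph0] by linarith
    then show ?thesis using small[OF True] zero_le_power2[of "exp t - 1 - t"] by linarith
  next
    case False
    hence b: "\<bar>t\<bar>/3 \<le> exp t - 1 - t" using big by simp
    have "(\<bar>t\<bar>/3)\<^sup>2 \<le> (exp t - 1 - t)\<^sup>2" using b by (intro power_mono) auto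
    hence "t\<^sup>2 \<le> 9*(exp t - 1 - t)\<^sup>2" by (simp add: power_divide)
    moreover have "0 \<le> 4*L\<^sup>2*(exp t - 1 - t)" using b by simp
    ultimately show ?thesis by linarith
  qed
  assume tL: "\<bar>t\<bar> \<le> L"
  show "t\<^sup>2 \<le> 4*L\<^sup>2*(exp t - 1 - t)"
  proof (cases "t \<ge> -3/2")
    case True
    have ph0: "0 \<le> exp t - 1 - t" using exp_ge_add_one_self[of t] by linarith
    have "4*(exp t - 1 - t) \<le> 4*L\<^sup>2*(exp t - 1 - t)" using mult_right_mono[OF L2 ph0] by linarith
    then show ?thesis using small[OF True] by linarith
  next
    case False
    hence b: "\<bar>t\<bar>/3 \<le> exp t - 1 - t" using big by simp
    have "t\<^sup>2 = \<bar>t\<bar> * \<bar>t\<bar>" by (simp add: power2_eq_square)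
    also have "\<dots> \<le> L * \<bar>t\<bar>" using tL by (intro mult_right_mono) auto
    also have "\<dots> \<le> L * (3*(exp t - 1 - t))" using b L by (intro mult_left_mono) auto
    also have "\<dots> \<le> 4*L\<^sup>2*(exp t - 1 - t)"
    proof -
      have "3*L \<le> 4*L\<^sup>2" using L by (simp add: power2_eq_square)
      moreover have "0 \<le> exp t - 1 - t" using b by (smt (verit) abs_ge_zero divide_nonneg_pos)
      ultimately have "(3*L)*(exp t - 1 - t) \<le> (4*L\<^sup>2)*(exp t - 1 - t)" by (rule mult_right_mono)
      thus ?thesis by (simp add: algebra_simps)
    qed
    finally show ?thesis .
  qed
qed

lemma cp_facts:
  fixes f :: "'x \<Rightarrow> real^'m" and g :: "'y::finite \<Rightarrow> real^'m"
  shows "cond_prob f g x y > 0" "(\<Sum>y\<in>UNIV. cond_prob f g x y) = 1"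
    "cond_prob f g x y \<le> 1"
    "ln (cond_prob f g x y) = f x \<bullet> g y - ln (\<Sum>y'\<in>UNIV. exp (f x \<bullet> g y'))"
proof -
  let ?Z = "\<Sum>y'\<in>UNIV. exp (f x \<bullet> g y')"
  have Z: "?Z > 0" by (intro sum_pos) auto
  show p: "cond_prob f g x y > 0" unfolding cond_prob_def using Z by simp
  show s: "(\<Sum>y\<in>UNIV. cond_prob f g x y) = 1" unfolding cond_prob_def
    using Z by (simp add: sum_divide_distrib[symmetric])
  have "cond_prob f g x y \<le> (\<Sum>y\<in>UNIV. cond_prob f g x y)"
    by (rule member_le_sum) (auto simp: cond_prob_def Z less_imp_le)
  thus "cond_prob f g x y \<le> 1" using s by simp
  show "ln (cond_prob f g x y) = f x \<bullet> g y - ln ?Z" unfolding cond_prob_def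
    using Z by (simp add: ln_div)
qed

lemma sq_shift: 
  fixes a :: "'y::finite \<Rightarrow> real"
  assumes "(\<Sum>y\<in>UNIV. a y + c) = 0"
  shows "(\<Sum>y\<in>UNIV. (a y + c)\<^sup>2) \<le> (\<Sum>y\<in>UNIV. (a y)\<^sup>2)"
proof -
  have "(\<Sum>y\<in>UNIV. (a y)\<^sup>2) = (\<Sum>y\<in>UNIV. (a y + c)\<^sup>2 - 2*c*(a y + c) + c\<^sup>2)"
    by (intro sum.cong) (auto simp: power2_eq_square algebra_simps)
  also have "\<dots> = (\<Sum>y\<in>UNIV. (a y + c)\<^sup>2) - (\<Sum>y\<in>UNIV. 2*c*(a y + c)) + (\<Sum>y\<in>(UNIV::'y set). c\<^sup>2)"
    by (simp only: sum.distrib sum_subtractf)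
  also have "(\<Sum>y\<in>UNIV. 2*c*(a y + c)) = 2*c*(\<Sum>y\<in>UNIV. a y + c)"
    by (rule sum_distrib_left[symmetric])
  finally have "(\<Sum>y\<in>UNIV. (a y)\<^sup>2) = (\<Sum>y\<in>UNIV. (a y + c)\<^sup>2) + (\<Sum>y\<in>(UNIV::'y set). c\<^sup>2)"
    using assms by simp
  moreover have "(\<Sum>y\<in>(UNIV::'y set). c\<^sup>2) \<ge> 0" by (intro sum_nonneg) auto
  ultimately show ?thesis by linarith
qed

theorem mainTheorem18:
  fixes f f' :: "'x \<Rightarrow> real^'m" and g g' :: "'y::finite \<Rightarrow> real^'m"
    and x :: 'x and \<tau> :: real
  assumes "in_Theta f g" and "in_Theta f' g'"
    and "0 < \<tau>" and "\<tau> \<le> 1/3"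
    and "Min (range (\<lambda>y. cond_prob f g x y)) \<ge> \<tau>"
  shows "(norm (logits f g x - logits f' g' x))\<^sup>2
           \<le> 12 * (ln \<tau>)\<^sup>2 / \<tau> * KL (cond_prob f g x) (cond_prob f' g' x)
             + 9 / \<tau>\<^sup>2 * (KL (cond_prob f g x) (cond_prob f' g' x))\<^sup>2
         \<and> (Min (range (\<lambda>y. cond_prob f' g' x y)) \<ge> \<tau> \<longrightarrow>
            (norm (logits f g x - logits f' g' x))\<^sup>2
              \<le> 4 * (ln \<tau>)\<^sup>2 / \<tau> * KL (cond_prob f g x) (cond_prob f' g' x))"
proof -
  define p where "p = cond_prob f g x"
  define q where "q = cond_prob f' g' x"
  define Z where "Z = (\<Sum>y'\<in>UNIV. exp (f x \<bullet> g y'))"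
  define Z' where "Z' = (\<Sum>y'\<in>UNIV. exp (f' x \<bullet> g' y'))"
  define a where "a y = ln (p y) - ln (q y)" for y
  define c where "c = ln Z - ln Z'"
  define K where "K = KL p q"
  define L where "L = - ln \<tau>"
  define \<phi> where "\<phi> y = exp (- a y) - 1 - (- a y)" for y
  have pp: "p y > 0" "p y \<le> 1" for y unfolding p_def by (rule cp_facts(1), rule cp_facts(3))
  have qq: "q y > 0" "q y \<le> 1" for y unfolding q_def by (rule cp_facts(1), rule cp_facts(3))
  have sp: "(\<Sum>y\<in>UNIV. p y) = 1" "(\<Sum>y\<in>UNIV. q y) = 1" unfolding p_def q_def by (rule cp_facts(2))+
  have lp: "ln (p y) = f x \<bullet> g y - ln Z" "ln (q y) = f' x \<bullet> g' y - ln Z'" for y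
    unfolding p_def q_def Z_def Z'_def by (rule cp_facts(4))+
  have pt: "p y \<ge> \<tau>" for y
  proof -
    have "Min (range p) \<le> p y" by (intro Min_le) auto
    thus ?thesis using assms(5) unfolding p_def by simp
  qed
  have comp: "(logits f g x - logits f' g' x) $ y = a y + c" for y
    unfolding logits_def a_def c_def using lp[of y] by simp
  have sum0: "(\<Sum>y\<in>UNIV. a y + c) = 0"
  proof -
    have "(\<Sum>y\<in>UNIV. a y + c) = (\<Sum>y\<in>UNIV. f x \<bullet> g y) - (\<Sum>y\<in>UNIV. f' x \<bullet> g' y)"
    proof -
      have "a y + c = f x \<bullet> g y - f' x \<bullet> g' y" for y using comp[of y] by (simp add: logits_def)
      hence "(\<Sum>y\<in>UNIV. a y + c) = (\<Sum>y\<in>UNIV. f x \<bullet> g y - f' x \<bullet> g' y)" by simp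
      thus ?thesis by (simp add: sum_subtractf)
    qed
    also have "\<dots> = 0" using assms(1,2) unfolding in_Theta_def
      by (simp add: inner_sum_right[symmetric])
    finally show ?thesis .
  qed
  have nrm: "(norm (logits f g x - logits f' g' x))\<^sup>2 \<le> (\<Sum>y\<in>UNIV. (a y)\<^sup>2)"
  proof -
    have "(norm (logits f g x - logits f' g' x))\<^sup>2 = (\<Sum>y\<in>UNIV. (a y + c)\<^sup>2)"
      unfolding power2_norm_eq_inner inner_vec_def comp by (simp add: power2_eq_square)
    thus ?thesis using sq_shift[OF sum0] by simp
  qed
  have phi0: "\<phi> y \<ge> 0" for y unfolding \<phi>_def using exp_ge_add_one_self[of "- a y"] by linarith
  have KK: "K = (\<Sum>y\<in>UNIV. p y * \<phi> y)"
  proof -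
    have e: "exp (- a y) = q y / p y" for y
      unfolding a_def using pp[of y] qq[of y] by (simp add: exp_diff)
    have "(\<Sum>y\<in>UNIV. p y * \<phi> y) = (\<Sum>y\<in>UNIV. q y - p y + p y * a y)"
    proof (intro sum.cong refl)
      fix y
      have "p y \<noteq> 0" using pp(1)[of y] by simp
      thus "p y * \<phi> y = q y - p y + p y * a y" unfolding \<phi>_def e by (simp add: field_simps)
    qed
    also have "\<dots> = (\<Sum>y\<in>UNIV. p y * a y)" using sp by (simp add: sum.distrib sum_subtractf)
    also have "\<dots> = K" unfolding K_def KL_def a_def
    proof (intro sum.cong refl)
      fix y
      show "p y * (ln (p y) - ln (q y)) = p y * ln (p y / q y)"
        using pp(1)[of y] qq(1)[of y] by (simp add: ln_div)
    qed
    finally show ?thesis by simp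
  qed
  have K0: "K \<ge> 0" unfolding KK by (intro sum_nonneg mult_nonneg_nonneg less_imp_le[OF pp(1)] phi0)
  have L1: "L \<ge> 1"
  proof -
    have "ln \<tau> \<le> ln (1/3)" using assms(3,4) by simp
    moreover have "ln (1/3::real) = - ln 3" by (simp add: ln_div)
    moreover have "1 \<le> ln (3::real)" using exp_le by (simp add: ln_ge_iff)
    ultimately show ?thesis unfolding L_def by linarith
  qed
  have L2: "L\<^sup>2 = (ln \<tau>)\<^sup>2" unfolding L_def by simp
  have sphi: "\<tau> * (\<Sum>y\<in>UNIV. \<phi> y) \<le> K"
    unfolding KK sum_distrib_left using pt phi0 by (intro sum_mono mult_right_mono) auto
  hence sphi': "(\<Sum>y\<in>UNIV. \<phi> y) \<le> K / \<tau>" using assms(3) by (simp add: field_simps)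
  have sphi2: "(\<Sum>y\<in>UNIV. (\<phi> y)\<^sup>2) \<le> (K / \<tau>)\<^sup>2"
  proof -
    have "(\<Sum>y\<in>UNIV. (\<phi> y)\<^sup>2) \<le> (\<Sum>y\<in>UNIV. \<phi> y * (\<Sum>y\<in>UNIV. \<phi> y))"
      unfolding power2_eq_square using phi0
      by (intro sum_mono mult_left_mono member_le_sum) auto
    also have "\<dots> = (\<Sum>y\<in>UNIV. \<phi> y)\<^sup>2" by (simp add: power2_eq_square sum_distrib_right)
    also have "\<dots> \<le> (K / \<tau>)\<^sup>2" using sphi' phi0 by (intro power_mono sum_nonneg) auto
    finally show ?thesis .
  qed
  have part1: "(\<Sum>y\<in>UNIV. (a y)\<^sup>2) \<le> 12 * (ln \<tau>)\<^sup>2 / \<tau> * K + 9 / \<tau>\<^sup>2 * K\<^sup>2"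
  proof -
    have "(\<Sum>y\<in>UNIV. (a y)\<^sup>2) \<le> (\<Sum>y\<in>UNIV. 4*L\<^sup>2*\<phi> y + 9*(\<phi> y)\<^sup>2)"
      using phi_bounds(1)[OF L1, of "- a _"] unfolding \<phi>_def by (intro sum_mono) simp
    also have "\<dots> = 4*L\<^sup>2*(\<Sum>y\<in>UNIV. \<phi> y) + 9*(\<Sum>y\<in>UNIV. (\<phi> y)\<^sup>2)"
      by (simp add: sum.distrib sum_distrib_left)
    also have "\<dots> \<le> 4*L\<^sup>2*(K/\<tau>) + 9*(K/\<tau>)\<^sup>2"
      using sphi' sphi2 by (intro add_mono mult_left_mono) auto
    also have "\<dots> \<le> 12 * (ln \<tau>)\<^sup>2 / \<tau> * K + 9 / \<tau>\<^sup>2 * K\<^sup>2"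
    proof -
      have "4*L\<^sup>2*(K/\<tau>) \<le> 12*L\<^sup>2*(K/\<tau>)" using K0 assms(3) by (intro mult_right_mono) auto
      thus ?thesis unfolding L2 by (simp add: power_divide)
    qed
    finally show ?thesis .
  qed
  have part2: "(\<Sum>y\<in>UNIV. (a y)\<^sup>2) \<le> 4 * (ln \<tau>)\<^sup>2 / \<tau> * K"
    if qt: "Min (range (\<lambda>y. cond_prob f' g' x y)) \<ge> \<tau>"
  proof -
    have qt': "q y \<ge> \<tau>" for y
    proof -
      have "Min (range q) \<le> q y" by (intro Min_le) auto
      thus ?thesis using qt unfolding q_def by simp
    qed
    have aL: "\<bar>- a y\<bar> \<le> L" for y
    proof -
      have "ln \<tau> \<le> ln (p y)" using pt[of y] assms(3) by simp
      moreover have "ln \<tau> \<le> ln (q y)" using qt'[of y] assms(3) by simp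
      moreover have "ln (p y) \<le> 0" using pp(1)[of y] pp(2)[of y] by simp
      moreover have "ln (q y) \<le> 0" using qq(1)[of y] qq(2)[of y] by simp
      ultimately show ?thesis unfolding a_def L_def by linarith
    qed
    have "(\<Sum>y\<in>UNIV. (a y)\<^sup>2) \<le> (\<Sum>y\<in>UNIV. 4*L\<^sup>2*\<phi> y)"
      using phi_bounds(2)[OF L1 aL] unfolding \<phi>_def by (intro sum_mono) simp
    also have "\<dots> = 4*L\<^sup>2*(\<Sum>y\<in>UNIV. \<phi> y)" by (simp add: sum_distrib_left)
    also have "\<dots> \<le> 4*L\<^sup>2*(K/\<tau>)" using sphi' by (intro mult_left_mono) auto
    also have "\<dots> = 4 * (ln \<tau>)\<^sup>2 / \<tau> * K" unfolding L2 by simp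
    finally show ?thesis .
  qed
  show ?thesis using nrm part1 part2 unfolding K_def p_def q_def by auto
qed

end
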